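(* Consider Dallal's model and the hypotheses $H_0:\lambda_0=\lambda_1$ versus $H_1:\lambda_0\ne\lambda_1$. Under $H_1$ use the prior on $(0,1)^3$ $$\pi_{H_1}(\gamma,u,v)=\frac1K\frac{2^{1/2}}{B(\tfrac12,\tfrac12)}\frac{\gamma^{-1/2}(1-\gamma)^{-1/2}}{1+\gamma}(u+rv)^d\frac{u^{-1/2}(1-u)^{-1/2}}{B(\tfrac12,\tfrac12)}\frac{v^{-1/2}(1-v)^{-1/2}}{B(\tfrac12,\tfrac12)}$$ ($d\ge0$, $K$ the normalizing constant), and under $H_0$, writing $\theta=(1+\gamma)\lambda$ for the common value $\lambda=\lambda_0=\lambda_1$, use the prior $\pi_{H_0}(\gamma,\theta)=\frac{2^{1/2}}{B(\frac12,\frac12)}\frac{\gamma^{-1/2}(1-\gamma)^{-1/2}}{1+\gamma}\frac{\theta^{a-1}(1-\theta)^{-1/2}}{B(a,\frac12)}$ on $(0,1)^2$ ($a>0$). Then the marginal predictive probabilities of the data are $$p_{H_0}(D)=C\,\frac{B(m_{1+}+\tfrac12,m_{2+}+\tfrac12)}{B(\tfrac12,\tfrac12)}\frac{B(m_{1+}+m_{2+}+a,m_{0+}+\tfrac12)}{B(a,\tfrac12)},$$ $$p_{H_1}(D)=C\,\frac{B(m_{1+}+\tfrac12,m_{2+}+\tfrac12)B(m_{10}+m_{20}+\tfrac12,m_{00}+\tfrac12)B(m_{11}+m_{21}+\tfrac12,m_{01}+\tfrac12)}{B(\tfrac12,\tfrac12)^3}\cdot\frac{I}{K},$$ where $C=\binom{m_{+0}}{m_{00},m_{10},m_{20}}\binom{m_{+1}}{m_{01},m_{11},m_{21}}$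 and $I=\mathbb E[(U'+rV')^d]$ for independent $U'\sim\mathrm{Beta}(m_{10}+m_{20}+\tfrac12,m_{00}+\tfrac12)$, $V'\sim\mathrm{Beta}(m_{11}+m_{21}+\tfrac12,m_{01}+\tfrac12)$. Consequently the Bayes factor $BF_\lambda=p_{H_0}(D)/p_{H_1}(D)$ satisfies $$\frac1{BF_\lambda}=\frac{B(m_{10}+m_{20}+\tfrac12,m_{00}+\tfrac12)\,B(m_{11}+m_{21}+\tfrac12,m_{01}+\tfrac12)\,B(a,\tfrac12)}{B(m_{1+}+m_{2+}+a,m_{0+}+\tfrac12)\,B(\tfrac12,\tfrac12)^2}\cdot\frac IK .$$ In particular, for $d=0$ one has $K=I=1$.
   Context: Dallal's model: for groups $i\in\{0,1\}$ with fixed sizes $m_{+i}$, $(m_{0i},m_{1i},m_{2i})$ is trinomial with probabilities $1-(1+\gamma)\lambda_i$, $2\gamma\lambda_i$, $(1-\gamma)\lambda_i$, independently over $i$, $0<\gamma<1$, $0<\lambda_i<1/(1+\gamma)$. $U=(1+\gamma)\lambda_0$, $V=(1+\gamma)\lambda_1$, $r=m_{+1}/m_{+0}$, $m_{1+}=m_{10}+m_{11}$, $m_{2+}=m_{20}+m_{21}$, $m_{0+}=m_{00}+m_{01}$. The marginal predictive probability under a hypothesis is the likelihood (including multinomial coefficients) integrated against that hypothesis's prior. $B$ is the Beta function. *)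

theory Defs
  imports "HOL-Analysis.Analysis"
begin

text \<open>Data: m j i = m_{ji}, category j in {0,1,2}, group i in {0,1}.\<close>

definition col :: "(nat \<Rightarrow> nat \<Rightarrow> nat) \<Rightarrow> nat \<Rightarrow> nat" where
  "col m i = m 0 i + m 1 i + m 2 i"

definition row :: "(nat \<Rightarrow> nat \<Rightarrow> nat) \<Rightarrow> nat \<Rightarrow> nat" where
  "row m j = m j 0 + m j 1"

definition ratio :: "(nat \<Rightarrow> nat \<Rightarrow> nat) \<Rightarrow> real" where
  "ratio m = real (col m 1) / real (col m 0)"

definition multinom3 :: "nat \<Rightarrow> nat \<Rightarrow> nat \<Rightarrow> real" where
  "multinom3 a b c = fact (a + b + c) / (fact a * fact b * fact c)"

definition mcoef :: "(nat \<Rightarrow> nat \<Rightarrow> nat) \<Rightarrow> real" where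
  "mcoef m = multinom3 (m 0 0) (m 1 0) (m 2 0) * multinom3 (m 0 1) (m 1 1) (m 2 1)"

definition group_lik :: "(nat \<Rightarrow> nat \<Rightarrow> nat) \<Rightarrow> nat \<Rightarrow> real \<Rightarrow> real \<Rightarrow> real" where
  "group_lik m i g l =
     multinom3 (m 0 i) (m 1 i) (m 2 i) *
     (1 - (1 + g) * l) ^ m 0 i * (2 * g * l) ^ m 1 i * ((1 - g) * l) ^ m 2 i"

definition dallal_lik :: "(nat \<Rightarrow> nat \<Rightarrow> nat) \<Rightarrow> real \<Rightarrow> real \<Rightarrow> real \<Rightarrow> real" where
  "dallal_lik m g l0 l1 = group_lik m 0 g l0 * group_lik m 1 g l1"

definition beta_density :: "real \<Rightarrow> real \<Rightarrow> real \<Rightarrow> real" where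
  "beta_density p q x = x powr (p - 1) * (1 - x) powr (q - 1) / Beta p q"

definition gamma_prior :: "real \<Rightarrow> real" where
  "gamma_prior g = sqrt 2 / Beta (1/2) (1/2) * (g powr (-1/2) * (1 - g) powr (-1/2) / (1 + g))"

definition prior_H1_unnorm :: "real \<Rightarrow> real \<Rightarrow> real \<Rightarrow> real \<Rightarrow> real \<Rightarrow> real" where
  "prior_H1_unnorm r d g u v =
     gamma_prior g * (u + r * v) powr d *
     (u powr (-1/2) * (1 - u) powr (-1/2) / Beta (1/2) (1/2)) *
     (v powr (-1/2) * (1 - v) powr (-1/2) / Beta (1/2) (1/2))"

abbreviation cube :: "(real \<times> real \<times> real) set" where
  "cube \<equiv> {0<..<1} \<times> {0<..<1} \<times> {0<..<1}"

abbreviation square :: "(real \<times> real) set" where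
  "square \<equiv> {0<..<1} \<times> {0<..<1}"

definition K_const :: "real \<Rightarrow> real \<Rightarrow> real" where
  "K_const r d = set_lebesgue_integral (lborel \<Otimes>\<^sub>M lborel \<Otimes>\<^sub>M lborel) cube
                    (\<lambda>(g, u, v). prior_H1_unnorm r d g u v)"

definition prior_H1 :: "real \<Rightarrow> real \<Rightarrow> real \<Rightarrow> real \<Rightarrow> real \<Rightarrow> real" where
  "prior_H1 r d g u v = prior_H1_unnorm r d g u v / K_const r d"

definition prior_H0 :: "real \<Rightarrow> real \<Rightarrow> real \<Rightarrow> real" where
  "prior_H0 a g t = gamma_prior g * (t powr (a - 1) * (1 - t) powr (-1/2) / Beta a (1/2))"

definition pH1 :: "(nat \<Rightarrow> nat \<Rightarrow> nat) \<Rightarrow> real \<Rightarrow> real" where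
  "pH1 m d = set_lebesgue_integral (lborel \<Otimes>\<^sub>M lborel \<Otimes>\<^sub>M lborel) cube
     (\<lambda>(g, u, v). dallal_lik m g (u / (1 + g)) (v / (1 + g)) * prior_H1 (ratio m) d g u v)"

definition pH0 :: "(nat \<Rightarrow> nat \<Rightarrow> nat) \<Rightarrow> real \<Rightarrow> real" where
  "pH0 m a = set_lebesgue_integral (lborel \<Otimes>\<^sub>M lborel) square
     (\<lambda>(g, t). dallal_lik m g (t / (1 + g)) (t / (1 + g)) * prior_H0 a g t)"

definition I_const :: "(nat \<Rightarrow> nat \<Rightarrow> nat) \<Rightarrow> real \<Rightarrow> real" where
  "I_const m d = set_lebesgue_integral (lborel \<Otimes>\<^sub>M lborel) square
     (\<lambda>(u, v). (u + ratio m * v) powr d *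
        beta_density (real (m 1 0 + m 2 0) + 1/2) (real (m 0 0) + 1/2) u *
        beta_density (real (m 1 1 + m 2 1) + 1/2) (real (m 0 1) + 1/2) v)"

end

theory Submission
  imports Defs
begin

lemma nn_prod:
  fixes f :: "real \<Rightarrow> ennreal" and g :: "'b \<Rightarrow> ennreal"
  assumes N: "sigma_finite_measure N" and [measurable]: "f \<in> borel_measurable lborel" "g \<in> borel_measurable N"
  shows "(\<integral>\<^sup>+x. f (fst x) * g (snd x) \<partial>(lborel \<Otimes>\<^sub>M N)) = (\<integral>\<^sup>+x. f x \<partial>lborel) * (\<integral>\<^sup>+y. g y \<partial>N)"
proof -
  have "(\<integral>\<^sup>+x. f (fst x) * g (snd x) \<partial>(lborel \<Otimes>\<^sub>M N)) = (\<integral>\<^sup>+ x. \<integral>\<^sup>+ y. f x * g y \<partial>N \<partial>lborel)"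
    using sigma_finite_measure.nn_integral_fst[OF N, of "\<lambda>x. f (fst x) * g (snd x)" lborel] by simp
  also have "\<dots> = (\<integral>\<^sup>+ x. f x * (\<integral>\<^sup>+ y. g y \<partial>N) \<partial>lborel)"
    by (simp add: nn_integral_cmult)
  also have "\<dots> = (\<integral>\<^sup>+x. f x \<partial>lborel) * (\<integral>\<^sup>+y. g y \<partial>N)"
    by (simp add: nn_integral_multc)
  finally show ?thesis .
qed

lemma sf2: "sigma_finite_measure (lborel \<Otimes>\<^sub>M (lborel::real measure))"
  by (intro sigma_finite_pair_measure lborel.sigma_finite_measure_axioms)

lemma nn_beta:
  fixes p q :: real assumes "p > 0" "q > 0"
  shows "(\<integral>\<^sup>+x. ennreal (indicator {0<..<1} x * (x powr (p-1) * (1-x) powr (q-1))) \<partial>lborel) = ennreal (Beta p q)"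
proof -
  have "((\<lambda>x. x powr (p-1) * (1-x) powr (q-1)) has_integral Beta p q) {0<..<1}"
    using has_integral_Beta_real[OF assms] by (simp add: has_integral_Icc_iff_Ioo)
  from nn_integral_has_integral_lebesgue'[OF _ this] show ?thesis
    by (simp add: mult_ac ennreal_mult' ennreal_indicator)
qed

lemma powr_nat_add: "(x::real) > 0 \<Longrightarrow> x powr (real n + c) = x ^ n * x powr c"
  by (simp add: powr_add powr_realpow)

lemma Beta_pos: "(p::real) > 0 \<Longrightarrow> q > 0 \<Longrightarrow> Beta p q > 0"
  by (simp add: Beta_def Gamma_real_pos)

lemma powr_mhalf: "(x::real) > 0 \<Longrightarrow> x powr (-1/2) = 1 / sqrt x"
  by (simp add: powr_minus_divide powr_half_sqrt)

definition Gm :: "nat \<Rightarrow> nat \<Rightarrow> real \<Rightarrow> real" where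
  "Gm k l g = sqrt 2 * (g powr (-1/2) * (1-g) powr (-1/2) / (1+g)) * (2*g/(1+g))^k * ((1-g)/(1+g))^l"

lemma Gm_pt:
  fixes x :: real assumes x: "0 < x" "x < 1"
  shows "(2*x/(1+x)) powr (real k + 1/2 - 1) * (1 - 2*x/(1+x)) powr (real l + 1/2 - 1) * (2/(1+x)^2) = Gm k l x"
proof -
  define s where "s = 2*x/(1+x)"
  have s1: "1 - s = (1-x)/(1+x)" using x by (simp add: s_def field_simps)
  have sp: "s > 0" "1 - s > 0" using x by (auto simp: s_def s1)
  have e: "real k + 1/2 - 1 = real k + (-1/2)" "real l + 1/2 - 1 = real l + (-1/2)" by simp_all
  have ss: "sqrt s = sqrt 2 * sqrt x / sqrt (1+x)" by (simp add: s_def real_sqrt_divide real_sqrt_mult)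
  have ss1: "sqrt (1-s) = sqrt (1-x) / sqrt (1+x)" by (simp add: s1 real_sqrt_divide)
  have q: "sqrt (1+x) * sqrt (1+x) = 1 + x" using x by simp
  have q2: "sqrt 2 * sqrt 2 = (2::real)" by simp
  have sx: "sqrt x > 0" "sqrt (1-x) > 0" "sqrt (1+x) > 0" using x by auto
  have key: "(1 / sqrt s) * (1 / sqrt (1-s)) * (2/(1+x)^2) = sqrt 2 * (1 / sqrt x * (1 / sqrt (1-x)) / (1+x))"
  proof -
    have "(1 / sqrt s) * (1 / sqrt (1-s)) * (2/(1+x)^2) = (sqrt (1+x) * sqrt (1+x)) * 2 / (sqrt 2 * sqrt x * sqrt (1-x) * (1+x)^2)"
      unfolding ss ss1 using sx by (simp add: field_simps)
    also have "\<dots> = (2 * (1+x)) / ((sqrt 2 * sqrt x * sqrt (1-x) * (1+x)) * (1+x))"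
      unfolding q by (simp add: power2_eq_square mult_ac)
    also have "\<dots> = 2 / (sqrt 2 * sqrt x * sqrt (1-x) * (1+x))"
      using x by (intro nonzero_mult_divide_mult_cancel_right) simp
    also have "\<dots> = (sqrt 2 * sqrt 2) / (sqrt 2 * (sqrt x * sqrt (1-x) * (1+x)))"
      by (simp add: mult_ac)
    also have "\<dots> = sqrt 2 / (sqrt x * sqrt (1-x) * (1+x))"
      by (rule nonzero_mult_divide_mult_cancel_left) simp
    also have "\<dots> = sqrt 2 * (1 / sqrt x * (1 / sqrt (1-x)) / (1+x))"
      by simp
    finally show ?thesis .
  qed
  have a: "s powr (real k + 1/2 - 1) = s^k * (1/sqrt s)"
    unfolding e powr_nat_add[OF sp(1)] powr_mhalf[OF sp(1)] ..
  have b: "(1-s) powr (real l + 1/2 - 1) = (1-s)^l * (1/sqrt (1-s))"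
    unfolding e powr_nat_add[OF sp(2)] powr_mhalf[OF sp(2)] ..
  have c: "x powr (-1/2) = 1/sqrt x" "(1-x) powr (-1/2) = 1/sqrt (1-x)"
    by (rule powr_mhalf, use x in simp)+
  have "s powr (real k + 1/2 - 1) * (1 - s) powr (real l + 1/2 - 1) * (2/(1+x)^2)
      = ((1 / sqrt s) * (1 / sqrt (1-s)) * (2/(1+x)^2)) * s^k * (1-s)^l"
    unfolding a b by (simp only: mult_ac)
  also have "\<dots> = Gm k l x"
    unfolding key Gm_def c s_def[symmetric] s1[symmetric] by (simp only: mult_ac)
  finally show ?thesis unfolding s_def .
qed

lemma nn_gam: "(\<integral>\<^sup>+g. ennreal (indicator {0<..<1} g * Gm k l g) \<partial>lborel) = ennreal (Beta (real k + 1/2) (real l + 1/2))"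
proof -
  let ?f = "\<lambda>s::real. s powr (real k + 1/2 - 1) * (1 - s) powr (real l + 1/2 - 1)"
  let ?g = "\<lambda>x::real. 2*x/(1+x)"
  have "ennreal (Beta (real k + 1/2) (real l + 1/2)) = (\<integral>\<^sup>+s. ennreal (indicator {0<..<1} s * ?f s) \<partial>lborel)"
    by (rule nn_beta[symmetric]) simp_all
  also have "\<dots> = (\<integral>\<^sup>+s. ennreal (?f s * indicator {?g 0 .. ?g 1} s) \<partial>lborel)"
    by (intro nn_integral_cong_AE)
       (use AE_lborel_singleton[of 0] AE_lborel_singleton[of 1] in \<open>eventually_elim, auto simp: indicator_def\<close>)
  also have "\<dots> = (\<integral>\<^sup>+x. ennreal (?f (?g x) * (2/(1+x)^2) * indicator {0..1} x) \<partial>lborel)"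
    apply (rule nn_integral_substitution)
        apply (auto intro!: derivative_eq_intros continuous_intros simp: set_borel_measurable_def field_simps power2_eq_square)
    by (smt (verit) mult_nonneg_nonneg)
  also have "\<dots> = (\<integral>\<^sup>+g. ennreal (indicator {0<..<1} g * Gm k l g) \<partial>lborel)"
    by (intro nn_integral_cong_AE)
       (use AE_lborel_singleton[of 0] AE_lborel_singleton[of 1] in \<open>eventually_elim, auto simp: indicator_def Gm_pt[simplified]\<close>)
  finally show ?thesis ..
qed

definition Ifun :: "(nat \<Rightarrow> nat \<Rightarrow> nat) \<Rightarrow> real \<Rightarrow> real \<times> real \<Rightarrow> real" where
  "Ifun m d = (\<lambda>(u, v). (u + ratio m * v) powr d *
        beta_density (real (m 1 0 + m 2 0) + 1/2) (real (m 0 0) + 1/2) u *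
        beta_density (real (m 1 1 + m 2 1) + 1/2) (real (m 0 1) + 1/2) v)"

lemma meas_Gm[measurable]: "Gm k l \<in> borel_measurable borel"
  unfolding Gm_def by measurable

lemma meas_Ifun[measurable]: "Ifun m d \<in> borel_measurable (lborel \<Otimes>\<^sub>M lborel)"
  unfolding Ifun_def beta_density_def by measurable

lemma meas_ind_sq: "(\<lambda>x. indicator square x * Ifun m d x) \<in> borel_measurable (lborel \<Otimes>\<^sub>M lborel)"
  by measurable

lemma nn_prod_real:
  fixes f :: "real \<Rightarrow> real" and g :: "'b \<Rightarrow> real"
  assumes N: "sigma_finite_measure N" and [measurable]: "f \<in> borel_measurable lborel" "g \<in> borel_measurable N"
    and "\<And>x. f x \<ge> 0" "\<And>y. g y \<ge> 0"
  shows "(\<integral>\<^sup>+x. ennreal (f (fst x) * g (snd x)) \<partial>(lborel \<Otimes>\<^sub>M N)) = (\<integral>\<^sup>+x. ennreal (f x) \<partial>lborel) * (\<integral>\<^sup>+y. ennreal (g y) \<partial>N)"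
  using nn_prod[OF N, of "\<lambda>x. ennreal (f x)" "\<lambda>y. ennreal (g y)"] assms(4,5)
  by (simp add: ennreal_mult)

lemma beta_density_nonneg: "p > 0 \<Longrightarrow> q > 0 \<Longrightarrow> beta_density p q x \<ge> 0"
  unfolding beta_density_def using Beta_pos[of p q] by simp

lemma Ifun_nonneg: "Ifun m d x \<ge> 0"
  unfolding Ifun_def by (cases x) (simp add: beta_density_nonneg)

lemma I_nn: "I_const m d = enn2real (\<integral>\<^sup>+x. ennreal (indicator square x * Ifun m d x) \<partial>(lborel \<Otimes>\<^sub>M lborel))"
proof -
  have "I_const m d = integral\<^sup>L (lborel \<Otimes>\<^sub>M lborel) (\<lambda>x. indicator square x * Ifun m d x)"
    unfolding I_const_def set_lebesgue_integral_def Ifun_def by simp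
  also have "\<dots> = enn2real (\<integral>\<^sup>+x. ennreal (indicator square x * Ifun m d x) \<partial>(lborel \<Otimes>\<^sub>M lborel))"
    by (rule integral_eq_nn_integral) (use meas_ind_sq Ifun_nonneg in auto)
  finally show ?thesis .
qed

lemma bd_pt:
  assumes "0 < u" "u < 1"
  shows "beta_density (real n + 1/2) (real j + 1/2) u =
     u^n * (1-u)^j * (u powr (-1/2) * (1-u) powr (-1/2)) / Beta (real n + 1/2) (real j + 1/2)"
proof -
  have e: "real k + 1/2 - 1 = real k + (-1/2)" for k by simp
  have "u powr (real n + 1/2 - 1) = u^n * u powr (-1/2)" unfolding e by (rule powr_nat_add) (use assms in simp)
  moreover have "(1-u) powr (real j + 1/2 - 1) = (1-u)^j * (1-u) powr (-1/2)" unfolding e by (rule powr_nat_add) (use assms in simp)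
  ultimately show ?thesis unfolding beta_density_def by (simp add: mult_ac)
qed

lemma dallal_pt:
  assumes "0 < g"
  shows "dallal_lik m g (u/(1+g)) (v/(1+g)) = mcoef m * ((2*g/(1+g))^(row m 1) * ((1-g)/(1+g))^(row m 2)) *
      (u^(m 1 0 + m 2 0) * (1-u)^(m 0 0)) * (v^(m 1 1 + m 2 1) * (1-v)^(m 0 1))"
proof -
  define A where "A = 2*g/(1+g)"
  define C where "C = (1-g)/(1+g)"
  have h: "(1+g)*(x/(1+g)) = x" "2*g*(x/(1+g)) = A*x" "(1-g)*(x/(1+g)) = C*x" for x
    using assms by (auto simp: field_simps A_def C_def)
  show ?thesis
    unfolding dallal_lik_def group_lik_def mcoef_def row_def h A_def[symmetric] C_def[symmetric]
    by (simp add: power_mult_distrib power_add mult_ac)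
qed

lemma H1_pt:
  assumes "0 < g" "g < 1" "0 < u" "u < 1" "0 < v" "v < 1"
  shows "dallal_lik m g (u/(1+g)) (v/(1+g)) * prior_H1_unnorm (ratio m) d g u v =
    (mcoef m * Beta (real (m 1 0 + m 2 0) + 1/2) (real (m 0 0) + 1/2) *
      Beta (real (m 1 1 + m 2 1) + 1/2) (real (m 0 1) + 1/2) / Beta (1/2) (1/2) ^ 3) *
    (Gm (row m 1) (row m 2) g * Ifun m d (u,v))"
proof -
  have B: "Beta (real (m 1 0 + m 2 0) + 1/2) (real (m 0 0) + 1/2) > 0"
    "Beta (real (m 1 1 + m 2 1) + 1/2) (real (m 0 1) + 1/2) > 0" "Beta (1/2) (1/2) > (0::real)"
    by (auto intro!: Beta_pos)
  define hg where "hg = g powr (-1/2) * (1-g) powr (-1/2) / (1+g)"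
  define A where "A = 2*g/(1+g)"
  define C where "C = (1-g)/(1+g)"
  define hu where "hu = u powr (-1/2) * (1-u) powr (-1/2)"
  define hv where "hv = v powr (-1/2) * (1-v) powr (-1/2)"
  define W where "W = (u + ratio m * v) powr d"
  show ?thesis
    unfolding dallal_pt[OF assms(1)] prior_H1_unnorm_def gamma_prior_def Gm_def Ifun_def
       case_prod_conv bd_pt[OF assms(3,4)] bd_pt[OF assms(5,6)]
       hg_def[symmetric] A_def[symmetric] C_def[symmetric] hu_def[symmetric] hv_def[symmetric] W_def[symmetric]
    using B by (simp add: field_simps power3_eq_cube)
qed

lemma Gm_nonneg: "0 < g \<Longrightarrow> g < 1 \<Longrightarrow> Gm k l g \<ge> 0"
  unfolding Gm_def by simp

lemma G_nonneg: "indicator {0<..<1} g * Gm k l g \<ge> 0"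
  by (cases "g \<in> {0<..<1}") (auto simp: Gm_nonneg)

lemma mcoef_nonneg: "mcoef m \<ge> 0"
  unfolding mcoef_def multinom3_def by simp

lemma prior_unnorm_nonneg: "0 < g \<Longrightarrow> g < 1 \<Longrightarrow> prior_H1_unnorm r d g u v \<ge> 0"
  unfolding prior_H1_unnorm_def gamma_prior_def using Beta_pos[of "1/2" "1/2"] by simp

lemma K_nonneg: "K_const r d \<ge> 0"
  unfolding K_const_def set_lebesgue_integral_def
  by (rule Bochner_Integration.integral_nonneg) (auto simp: indicator_def prior_unnorm_nonneg)

lemma gam_int: "enn2real (\<integral>\<^sup>+g. ennreal (indicator {0<..<1} g * Gm k l g) \<partial>lborel) = Beta (real k + 1/2) (real l + 1/2)"
  unfolding nn_gam by (simp add: Beta_pos less_imp_le)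

lemma pH1_val:
  "pH1 m d = (mcoef m * Beta (real (m 1 0 + m 2 0) + 1/2) (real (m 0 0) + 1/2) *
      Beta (real (m 1 1 + m 2 1) + 1/2) (real (m 0 1) + 1/2) / Beta (1/2) (1/2) ^ 3 / K_const (ratio m) d) *
    (Beta (real (row m 1) + 1/2) (real (row m 2) + 1/2) * I_const m d)"
proof -
  define c where "c = mcoef m * Beta (real (m 1 0 + m 2 0) + 1/2) (real (m 0 0) + 1/2) *
      Beta (real (m 1 1 + m 2 1) + 1/2) (real (m 0 1) + 1/2) / Beta (1/2) (1/2) ^ 3 / K_const (ratio m) d"
  define G where "G = (\<lambda>g. indicator {0<..<1} g * Gm (row m 1) (row m 2) g)"
  define H where "H = (\<lambda>y. indicator square y * Ifun m d y)"
  have [measurable]: "G \<in> borel_measurable lborel" unfolding G_def by measurable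
  have [measurable]: "H \<in> borel_measurable (lborel \<Otimes>\<^sub>M lborel)" unfolding H_def by measurable
  have Gn: "G g \<ge> 0" for g unfolding G_def by (rule G_nonneg)
  have Hn: "H y \<ge> 0" for y unfolding H_def by (cases "y \<in> square") (auto simp: Ifun_nonneg)
  have pt: "indicator cube x *\<^sub>R (case x of (g, u, v) \<Rightarrow> dallal_lik m g (u / (1 + g)) (v / (1 + g)) * prior_H1 (ratio m) d g u v)
      = c * (G (fst x) * H (snd x))" for x
  proof -
    obtain g u v where x: "x = (g, u, v)" by (cases x) auto
    show ?thesis
    proof (cases "x \<in> cube")
      case True
      then show ?thesis unfolding x prior_H1_def G_def H_def c_def
        using H1_pt[of g u v m d] by (simp add: indicator_def x)
    next
      case False
      then show ?thesis unfolding x G_def H_def by (auto simp: indicator_def x)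
    qed
  qed
  have "pH1 m d = integral\<^sup>L (lborel \<Otimes>\<^sub>M lborel \<Otimes>\<^sub>M lborel) (\<lambda>x. c * (G (fst x) * H (snd x)))"
    unfolding pH1_def set_lebesgue_integral_def pt ..
  also have "\<dots> = c * integral\<^sup>L (lborel \<Otimes>\<^sub>M lborel \<Otimes>\<^sub>M lborel) (\<lambda>x. G (fst x) * H (snd x))"
    by (rule integral_mult_right_zero)
  also have "integral\<^sup>L (lborel \<Otimes>\<^sub>M lborel \<Otimes>\<^sub>M lborel) (\<lambda>x. G (fst x) * H (snd x))
      = enn2real (\<integral>\<^sup>+x. ennreal (G (fst x) * H (snd x)) \<partial>(lborel \<Otimes>\<^sub>M lborel \<Otimes>\<^sub>M lborel))"
    by (rule integral_eq_nn_integral) (auto simp: Gn Hn)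
  also have "\<dots> = enn2real ((\<integral>\<^sup>+x. ennreal (G x) \<partial>lborel) * (\<integral>\<^sup>+y. ennreal (H y) \<partial>(lborel \<Otimes>\<^sub>M lborel)))"
    by (subst nn_prod_real[OF sf2]) (auto simp: Gn Hn)
  also have "\<dots> = Beta (real (row m 1) + 1/2) (real (row m 2) + 1/2) * I_const m d"
    unfolding enn2real_mult G_def gam_int I_nn H_def ..
  finally show ?thesis unfolding c_def .
qed

lemma H0_pt:
  assumes "0 < g" "g < 1" "0 < t" "t < 1" "0 < a"
  shows "dallal_lik m g (t/(1+g)) (t/(1+g)) * prior_H0 a g t =
    (mcoef m / (Beta (1/2) (1/2) * Beta a (1/2))) *
    (Gm (row m 1) (row m 2) g * (t powr (real (row m 1 + row m 2) + a - 1) * (1-t) powr (real (row m 0) + 1/2 - 1)))"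
proof -
  have e1: "real (row m 1 + row m 2) + a - 1 = real (row m 1 + row m 2) + (a - 1)" by simp
  have e2: "real (row m 0) + 1/2 - 1 = real (row m 0) + (-1/2)" by simp
  have p1: "t powr (real (row m 1 + row m 2) + a - 1) = t^(row m 1 + row m 2) * t powr (a-1)"
    unfolding e1 by (rule powr_nat_add) (use assms in simp)
  have p2: "(1-t) powr (real (row m 0) + 1/2 - 1) = (1-t)^(row m 0) * (1-t) powr (-1/2)"
    unfolding e2 by (rule powr_nat_add) (use assms in simp)
  have tN: "t^(m 1 0 + m 2 0) * t^(m 1 1 + m 2 1) = t^(row m 1 + row m 2)"
    unfolding row_def power_add[symmetric] by (simp add: ac_simps)
  have tN': "(1-t)^(m 0 0) * (1-t)^(m 0 1) = (1-t)^(row m 0)"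
    unfolding row_def power_add[symmetric] by (simp add: ac_simps)
  have B: "Beta (1/2) (1/2) > (0::real)" "Beta a (1/2) \<noteq> 0" 
    using Beta_pos[of "1/2" "1/2"] Beta_pos[of a "1/2"] assms(5) by auto
  define hg where "hg = g powr (-1/2) * (1-g) powr (-1/2) / (1+g)"
  define A where "A = 2*g/(1+g)"
  define C where "C = (1-g)/(1+g)"
  define ht where "ht = t powr (a-1)"
  define ht' where "ht' = (1-t) powr (-1/2)"
  have "dallal_lik m g (t/(1+g)) (t/(1+g)) * prior_H0 a g t =
     mcoef m * (A ^ row m 1 * C ^ row m 2) * (t^(m 1 0 + m 2 0) * t^(m 1 1 + m 2 1)) * ((1-t)^(m 0 0) * (1-t)^(m 0 1))
      * (sqrt 2 / Beta (1/2) (1/2) * hg * (ht * ht' / Beta a (1/2)))"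
    unfolding dallal_pt[OF assms(1)] prior_H0_def gamma_prior_def
       hg_def[symmetric] A_def[symmetric] C_def[symmetric] ht_def[symmetric] ht'_def[symmetric]
    by (simp only: mult_ac)
  also have "\<dots> = (mcoef m / (Beta (1/2) (1/2) * Beta a (1/2))) *
    (Gm (row m 1) (row m 2) g * (t powr (real (row m 1 + row m 2) + a - 1) * (1-t) powr (real (row m 0) + 1/2 - 1)))"
    unfolding tN tN' p1 p2 Gm_def hg_def[symmetric] A_def[symmetric] C_def[symmetric] ht_def[symmetric] ht'_def[symmetric]
    using B by (simp add: field_simps)
  finally show ?thesis .
qed

lemma pH0_val:
  assumes "0 < a"
  shows "pH0 m a = (mcoef m / (Beta (1/2) (1/2) * Beta a (1/2))) *
    (Beta (real (row m 1) + 1/2) (real (row m 2) + 1/2) * Beta (real (row m 1 + row m 2) + a) (real (row m 0) + 1/2))"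
proof -
  define c where "c = mcoef m / (Beta (1/2) (1/2) * Beta a (1/2))"
  define G where "G = (\<lambda>g. indicator {0<..<1} g * Gm (row m 1) (row m 2) g)"
  define H where "H = (\<lambda>t::real. indicator {0<..<1} t * (t powr (real (row m 1 + row m 2) + a - 1) * (1-t) powr (real (row m 0) + 1/2 - 1)))"
  have [measurable]: "G \<in> borel_measurable lborel" unfolding G_def by measurable
  have [measurable]: "H \<in> borel_measurable lborel" unfolding H_def by measurable
  have Gn: "G g \<ge> 0" for g unfolding G_def by (rule G_nonneg)
  have Hn: "H y \<ge> 0" for y unfolding H_def by simp
  have pt: "indicator square x *\<^sub>R (case x of (g, t) \<Rightarrow> dallal_lik m g (t / (1 + g)) (t / (1 + g)) * prior_H0 a g t)
      = c * (G (fst x) * H (snd x))" for x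
  proof -
    obtain g t where x: "x = (g, t)" by (cases x) auto
    show ?thesis
    proof (cases "x \<in> square")
      case True
      then show ?thesis unfolding x G_def H_def c_def
        using H0_pt[of g t a m] assms by (simp add: indicator_def x)
    next
      case False
      then show ?thesis unfolding x G_def H_def by (auto simp: indicator_def x)
    qed
  qed
  have "pH0 m a = integral\<^sup>L (lborel \<Otimes>\<^sub>M lborel) (\<lambda>x. c * (G (fst x) * H (snd x)))"
    unfolding pH0_def set_lebesgue_integral_def pt ..
  also have "\<dots> = c * integral\<^sup>L (lborel \<Otimes>\<^sub>M lborel) (\<lambda>x. G (fst x) * H (snd x))"
    by (rule integral_mult_right_zero)
  also have "integral\<^sup>L (lborel \<Otimes>\<^sub>M lborel) (\<lambda>x. G (fst x) * H (snd x))
      = enn2real (\<integral>\<^sup>+x. ennreal (G (fst x) * H (snd x)) \<partial>(lborel \<Otimes>\<^sub>M lborel))"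
    by (rule integral_eq_nn_integral) (auto simp: Gn Hn)
  also have "\<dots> = enn2real ((\<integral>\<^sup>+x. ennreal (G x) \<partial>lborel) * (\<integral>\<^sup>+y. ennreal (H y) \<partial>lborel))"
    by (subst nn_prod_real[OF lborel.sigma_finite_measure_axioms]) (auto simp: Gn Hn)
  also have "\<dots> = Beta (real (row m 1) + 1/2) (real (row m 2) + 1/2) * Beta (real (row m 1 + row m 2) + a) (real (row m 0) + 1/2)"
  proof -
    have p: "real (row m 1 + row m 2) + a > 0" "real (row m 0) + 1/2 > (0::real)" using assms by auto
    show ?thesis
      unfolding enn2real_mult G_def gam_int H_def nn_beta[OF p] using Beta_pos[OF p] by simp
  qed
  finally show ?thesis unfolding c_def .
qed

lemma nn_bd:
  fixes p q :: real assumes "p > 0" "q > 0"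
  shows "(\<integral>\<^sup>+x. ennreal (indicator {0<..<1} x * beta_density p q x) \<partial>lborel) = 1"
proof -
  have B: "Beta p q > 0" using assms by (rule Beta_pos)
  have "(\<integral>\<^sup>+x. ennreal (indicator {0<..<1} x * beta_density p q x) \<partial>lborel)
      = (\<integral>\<^sup>+x. ennreal (1 / Beta p q) * ennreal (indicator {0<..<1} x * (x powr (p-1) * (1-x) powr (q-1))) \<partial>lborel)"
    by (intro nn_integral_cong) (use B in \<open>simp add: beta_density_def ennreal_mult''[symmetric] mult_ac\<close>)
  also have "\<dots> = ennreal (1 / Beta p q) * ennreal (Beta p q)"
    by (simp add: nn_integral_cmult nn_beta[OF assms])
  also have "\<dots> = ennreal (1 / Beta p q * Beta p q)" by (rule ennreal_mult''[symmetric]) (use B in simp)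
  also have "\<dots> = 1" using B by simp
  finally show ?thesis .
qed


lemma ratio_nonneg: "ratio m \<ge> 0" unfolding ratio_def by simp

lemma I_zero: "I_const m 0 = 1"
proof -
  define F where "F = (\<lambda>u. indicator {0<..<1} u * beta_density (real (m 1 0 + m 2 0) + 1/2) (real (m 0 0) + 1/2) u)"
  define F' where "F' = (\<lambda>u. indicator {0<..<1} u * beta_density (real (m 1 1 + m 2 1) + 1/2) (real (m 0 1) + 1/2) u)"
  have [measurable]: "F \<in> borel_measurable lborel"
    unfolding F_def beta_density_def by measurable
  have [measurable]: "F' \<in> borel_measurable lborel"
    unfolding F'_def beta_density_def by measurable
  have Fn: "F x \<ge> 0" "F' x \<ge> 0" for x unfolding F_def F'_def
    by (auto simp: indicator_def intro!: beta_density_nonneg)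
  have pt: "indicator square y * Ifun m 0 y = F (fst y) * F' (snd y)" for y
  proof (cases y)
    case (Pair u v)
    show ?thesis
    proof (cases "y \<in> square")
      case True
      then have "u + ratio m * v > 0" using ratio_nonneg[of m] Pair
        by (auto intro!: add_pos_nonneg)
      then show ?thesis using True Pair unfolding Ifun_def F_def F'_def by (simp add: indicator_def)
    next
      case False
      then show ?thesis using Pair unfolding F_def F'_def by (auto simp: indicator_def)
    qed
  qed
  have "(\<integral>\<^sup>+x. ennreal (F (fst x) * F' (snd x)) \<partial>(lborel \<Otimes>\<^sub>M lborel)) = (\<integral>\<^sup>+x. ennreal (F x) \<partial>lborel) * (\<integral>\<^sup>+x. ennreal (F' x) \<partial>lborel)"
    by (rule nn_prod_real[OF lborel.sigma_finite_measure_axioms]) (auto simp: Fn)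
  also have "(\<integral>\<^sup>+x. ennreal (F x) \<partial>lborel) = 1" unfolding F_def by (rule nn_bd) simp_all
  also have "(\<integral>\<^sup>+x. ennreal (F' x) \<partial>lborel) = 1" unfolding F'_def by (rule nn_bd) simp_all
  finally show ?thesis unfolding I_nn pt by simp
qed

lemma K_zero:
  assumes r: "r \<ge> 0"
  shows "K_const r 0 = 1"
proof -
  define B where "B = Beta (1/2) (1/2::real)"
  have Bp: "B > 0" unfolding B_def by (rule Beta_pos) simp_all
  define G where "G = (\<lambda>g. indicator {0<..<1} g * Gm 0 0 g)"
  define F where "F = (\<lambda>u. indicator {0<..<1} u * beta_density (1/2) (1/2) u)"
  have [measurable]: "G \<in> borel_measurable lborel"
    unfolding G_def by measurable
  have [measurable]: "F \<in> borel_measurable lborel"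
    unfolding F_def beta_density_def by measurable
  have Gn: "G x \<ge> 0" for x unfolding G_def by (rule G_nonneg)
  have Fn: "F x \<ge> 0" for x unfolding F_def
    by (auto simp: indicator_def intro!: beta_density_nonneg)
  have FFn: "F (fst y) * F (snd y) \<ge> 0" for y using Fn by simp
  have pt: "indicator cube x *\<^sub>R (case x of (g, u, v) \<Rightarrow> prior_H1_unnorm r 0 g u v)
      = (1/B) * (G (fst x) * (F (fst (snd x)) * F (snd (snd x))))" for x
  proof -
    obtain g u v where x: "x = (g, u, v)" by (cases x) auto
    show ?thesis
    proof (cases "x \<in> cube")
      case True
      then have "u + r * v > 0" using r x by (auto intro!: add_pos_nonneg)
      then show ?thesis using True Bp unfolding x G_def F_def
        by (simp add: indicator_def prior_H1_unnorm_def gamma_prior_def Gm_def beta_density_def B_def)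
    next
      case False
      then show ?thesis unfolding x G_def F_def by (auto simp: indicator_def x)
    qed
  qed
  have "(\<integral>\<^sup>+x. ennreal (G (fst x) * (F (fst (snd x)) * F (snd (snd x)))) \<partial>(lborel \<Otimes>\<^sub>M lborel \<Otimes>\<^sub>M lborel))
     = (\<integral>\<^sup>+x. ennreal (G x) \<partial>lborel) * (\<integral>\<^sup>+y. ennreal (F (fst y) * F (snd y)) \<partial>(lborel \<Otimes>\<^sub>M lborel))"
    by (rule nn_prod_real[OF sf2, where g = "\<lambda>y. F (fst y) * F (snd y)"]) (auto simp: Gn FFn)
  also have "(\<integral>\<^sup>+y. ennreal (F (fst y) * F (snd y)) \<partial>(lborel \<Otimes>\<^sub>M lborel)) = (\<integral>\<^sup>+x. ennreal (F x) \<partial>lborel) * (\<integral>\<^sup>+x. ennreal (F x) \<partial>lborel)"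
    by (rule nn_prod_real[OF lborel.sigma_finite_measure_axioms]) (auto simp: Fn)
  also have "(\<integral>\<^sup>+x. ennreal (F x) \<partial>lborel) = 1" unfolding F_def by (rule nn_bd) simp_all
  also have "(\<integral>\<^sup>+x. ennreal (G x) \<partial>lborel) = ennreal B"
    unfolding G_def B_def using nn_gam[of 0 0] by simp
  finally have nn: "(\<integral>\<^sup>+x. ennreal (G (fst x) * (F (fst (snd x)) * F (snd (snd x)))) \<partial>(lborel \<Otimes>\<^sub>M lborel \<Otimes>\<^sub>M lborel)) = ennreal B"
    by simp
  have "K_const r 0 = integral\<^sup>L (lborel \<Otimes>\<^sub>M lborel \<Otimes>\<^sub>M lborel) (\<lambda>x. (1/B) * (G (fst x) * (F (fst (snd x)) * F (snd (snd x)))))"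
    unfolding K_const_def set_lebesgue_integral_def pt ..
  also have "\<dots> = (1/B) * integral\<^sup>L (lborel \<Otimes>\<^sub>M lborel \<Otimes>\<^sub>M lborel) (\<lambda>x. G (fst x) * (F (fst (snd x)) * F (snd (snd x))))"
    by (rule integral_mult_right_zero)
  also have "integral\<^sup>L (lborel \<Otimes>\<^sub>M lborel \<Otimes>\<^sub>M lborel) (\<lambda>x. G (fst x) * (F (fst (snd x)) * F (snd (snd x))))
      = enn2real (\<integral>\<^sup>+x. ennreal (G (fst x) * (F (fst (snd x)) * F (snd (snd x)))) \<partial>(lborel \<Otimes>\<^sub>M lborel \<Otimes>\<^sub>M lborel))"
    by (rule integral_eq_nn_integral) (auto simp: Gn Fn)
  also have "\<dots> = B" unfolding nn using Bp by simp
  finally show ?thesis using Bp by simp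
qed

theorem mainTheorem12:
  fixes m :: "nat \<Rightarrow> nat \<Rightarrow> nat" and a d :: real
  assumes "0 < a" and "0 \<le> d" and "0 < col m 0"
  defines "K \<equiv> K_const (ratio m) d" and "I \<equiv> I_const m d"
  shows "(pH0 m a = mcoef m *
           (Beta (real (row m 1) + 1/2) (real (row m 2) + 1/2) / Beta (1/2) (1/2)) *
           (Beta (real (row m 1 + row m 2) + a) (real (row m 0) + 1/2) / Beta a (1/2))) \<and>
         (pH1 m d = mcoef m *
           (Beta (real (row m 1) + 1/2) (real (row m 2) + 1/2) *
            Beta (real (m 1 0 + m 2 0) + 1/2) (real (m 0 0) + 1/2) *
            Beta (real (m 1 1 + m 2 1) + 1/2) (real (m 0 1) + 1/2) / Beta (1/2) (1/2) ^ 3) *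
           (I / K)) \<and>
         (1 / (pH0 m a / pH1 m d) =
           (Beta (real (m 1 0 + m 2 0) + 1/2) (real (m 0 0) + 1/2) *
            Beta (real (m 1 1 + m 2 1) + 1/2) (real (m 0 1) + 1/2) * Beta a (1/2)) /
           (Beta (real (row m 1 + row m 2) + a) (real (row m 0) + 1/2) * Beta (1/2) (1/2) ^ 2) *
           (I / K)) \<and>
         (d = 0 \<longrightarrow> K = 1 \<and> I = 1)"
proof -
  define Bg where "Bg = Beta (real (row m 1) + 1/2) (real (row m 2) + 1/2)"
  define Bu where "Bu = Beta (real (m 1 0 + m 2 0) + 1/2) (real (m 0 0) + 1/2)"
  define Bv where "Bv = Beta (real (m 1 1 + m 2 1) + 1/2) (real (m 0 1) + 1/2)"
  define Bt where "Bt = Beta (real (row m 1 + row m 2) + a) (real (row m 0) + 1/2)"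
  define B where "B = Beta (1/2) (1/2::real)"
  define Ba where "Ba = Beta a (1/2)"
  have pos: "Bg > 0" "Bu > 0" "Bv > 0" "Bt > 0" "B > 0" "Ba > 0"
    unfolding Bg_def Bu_def Bv_def Bt_def B_def Ba_def using assms(1)
    by (auto intro!: Beta_pos)
  have mc: "mcoef m > 0" unfolding mcoef_def multinom3_def by simp
  have h0: "pH0 m a = (mcoef m / (B * Ba)) * (Bg * Bt)"
    unfolding Bg_def Bt_def B_def Ba_def by (rule pH0_val[OF assms(1)])
  have h1: "pH1 m d = (mcoef m * Bu * Bv / B ^ 3 / K) * (Bg * I)"
    unfolding Bg_def Bu_def Bv_def B_def K_def I_def by (rule pH1_val)
  have p1: "pH0 m a = mcoef m * (Bg / B) * (Bt / Ba)"
    unfolding h0 using pos by (simp add: field_simps)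
  have p2: "pH1 m d = mcoef m * (Bg * Bu * Bv / B ^ 3) * (I / K)"
    unfolding h1 by (simp add: divide_inverse mult_ac)
  have p3: "1 / (pH0 m a / pH1 m d) = (Bu * Bv * Ba) / (Bt * B ^ 2) * (I / K)"
  proof (cases "K = 0")
    case True
    then show ?thesis unfolding h1 by simp
  next
    case False
    then show ?thesis unfolding h0 h1 using pos mc by (simp add: field_simps power2_eq_square power3_eq_cube)
  qed
  have p4: "d = 0 \<longrightarrow> K = 1 \<and> I = 1"
    unfolding K_def I_def using K_zero[OF ratio_nonneg] I_zero by simp
  show ?thesis
    using p1 p2 p3 p4 unfolding Bg_def Bu_def Bv_def Bt_def B_def Ba_def by simp
qed

end
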